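(* Let $X$ be an $n\times p$ real matrix, $Z\in\mathbb{R}^n$ a nonzero vector, and $1\le k\le\min(n,p)$. Let $V_kD_kU_k^T$ be the rank-$k$ truncated singular value decomposition of $X$, so that $\widetilde X_k = V_kD_kU_k^T$ is the best rank-$k$ approximation of $X$ in Frobenius norm, and let $P_Z = Z(Z^TZ)^{-1}Z^T$. Let $\widetilde X_{OG} = (I_n-P_Z)V_kD_kU_k^T$ be the reconstruction produced by the orthogonality-to-group (OG) procedure. Then the reconstruction error of the OG procedure is lower bounded by that of $\widetilde X_k$, and the additional error equals $\|P_ZV_kD_k\|_F^2$: $$\|X-\widetilde X_{OG}\|_F^2 = \|X - V_kD_kU_k^T\|_F^2 + \|P_ZV_kD_k\|_F^2 .$$
   Context: $V_k$ ($n\times k$), $D_k$ ($k\times k$ diagonal), $U_k$ ($p\times k$) contain respectively the first $k$ left singular vectors, the $k$ largest singular values, and the first $k$ right singular vectors of $X$. $\|\cdot\|_F$ is the Frobenius norm. *)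

theory Defs
  imports Complex_Main "Jordan_Normal_Form.Matrix"
begin

definition frob_norm :: "real mat \<Rightarrow> real" where
  "frob_norm A = sqrt (\<Sum>i<dim_row A. \<Sum>j<dim_col A. (A $$ (i,j))\<^sup>2)"

definition diag_mat_of :: "nat \<Rightarrow> (nat \<Rightarrow> real) \<Rightarrow> real mat" where
  "diag_mat_of k s = mat k k (\<lambda>(i,j). if i = j then s i else 0)"

definition first_cols :: "nat \<Rightarrow> real mat \<Rightarrow> real mat" where
  "first_cols k A = mat (dim_row A) k (\<lambda>(i,j). A $$ (i,j))"

definition is_svd :: "real mat \<Rightarrow> real mat \<Rightarrow> (nat \<Rightarrow> real) \<Rightarrow> real mat \<Rightarrow> bool" where
  "is_svd X V s U \<longleftrightarrow>
     (let n = dim_row X; p = dim_col X; m = min n p in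
        V \<in> carrier_mat n m \<and> U \<in> carrier_mat p m \<and>
        transpose_mat V * V = 1\<^sub>m m \<and> transpose_mat U * U = 1\<^sub>m m \<and>
        (\<forall>i<m. 0 \<le> s i) \<and> (\<forall>i j. i \<le> j \<and> j < m \<longrightarrow> s j \<le> s i) \<and>
        X = V * diag_mat_of m s * transpose_mat U)"

definition truncated_svd :: "real mat \<Rightarrow> nat \<Rightarrow> real mat \<Rightarrow> real mat \<Rightarrow> real mat \<Rightarrow> bool" where
  "truncated_svd X k Vk Dk Uk \<longleftrightarrow>
     (\<exists>V s U. is_svd X V s U \<and> Vk = first_cols k V \<and> Dk = diag_mat_of k s \<and> Uk = first_cols k U)"

definition proj_mat :: "real vec \<Rightarrow> real mat" where
  "proj_mat Z = (let Zc = mat_of_cols (dim_vec Z) [Z] in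
     Zc * (inverse (Z \<bullet> Z) \<cdot>\<^sub>m transpose_mat Zc))"

end

theory Submission
  imports Defs
begin

definition fsq :: "real mat \<Rightarrow> real" where
  "fsq A = (\<Sum>i<dim_row A. \<Sum>j<dim_col A. (A $$ (i,j))\<^sup>2)"

definition ipm :: "real mat \<Rightarrow> real mat \<Rightarrow> real" where
  "ipm A B = (\<Sum>i<dim_row A. \<Sum>j<dim_col A. A $$ (i,j) * B $$ (i,j))"

lemma frob_sq: "(frob_norm A)\<^sup>2 = fsq A"
  unfolding frob_norm_def fsq_def
  by (simp add: sum_nonneg)

lemma fsq_ipm: "fsq A = ipm A A"
  unfolding fsq_def ipm_def by (simp add: power2_eq_square)

lemma fsq_add:
  assumes "A \<in> carrier_mat n p" "B \<in> carrier_mat n p"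
  shows "fsq (A + B) = fsq A + fsq B + 2 * ipm A B"
  using assms unfolding fsq_def ipm_def
  by (simp add: power2_sum sum.distrib sum_distrib_left mult.assoc)

lemma ipm_zero: "ipm (0\<^sub>m n p) B = 0"
  unfolding ipm_def by simp

lemma ipm_transfer:
  assumes A: "A \<in> carrier_mat n p" and M: "M \<in> carrier_mat n k" and U: "U \<in> carrier_mat p k"
  shows "ipm A (M * transpose_mat U) = ipm (A * U) M"
proof -
  have "ipm A (M * transpose_mat U) = (\<Sum>i<n. \<Sum>j<p. \<Sum>l<k. A $$ (i,j) * (M $$ (i,l) * U $$ (j,l)))"
    using A M U unfolding ipm_def
    by (simp add: scalar_prod_def lessThan_atLeast0 sum_distrib_left)
  also have "\<dots> = (\<Sum>i<n. \<Sum>l<k. \<Sum>j<p. A $$ (i,j) * (M $$ (i,l) * U $$ (j,l)))"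
    by (simp add: sum.swap[of _ "{..<p}"])
  also have "\<dots> = ipm (A * U) M"
    using A M U unfolding ipm_def
    by (simp add: scalar_prod_def lessThan_atLeast0 sum_distrib_left mult_ac)
  finally show ?thesis .
qed

theorem lemma3:
  fixes X :: "real mat" and Z :: "real vec" and n p k :: nat
    and Vk Dk Uk :: "real mat"
  assumes "X \<in> carrier_mat n p"
    and "Z \<in> carrier_vec n" and "Z \<noteq> 0\<^sub>v n"
    and "1 \<le> k" and "k \<le> min n p"
    and "truncated_svd X k Vk Dk Uk"
  shows "(frob_norm (X - Vk * Dk * transpose_mat Uk))\<^sup>2
         \<le> (frob_norm (X - (1\<^sub>m n - proj_mat Z) * Vk * Dk * transpose_mat Uk))\<^sup>2
       \<and> (frob_norm (X - (1\<^sub>m n - proj_mat Z) * Vk * Dk * transpose_mat Uk))\<^sup>2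
       = (frob_norm (X - Vk * Dk * transpose_mat Uk))\<^sup>2 + (frob_norm (proj_mat Z * Vk * Dk))\<^sup>2"
proof -
  define m where "m = min n p"
  obtain V s U where svd: "is_svd X V s U" and Vk: "Vk = first_cols k V"
    and Dk: "Dk = diag_mat_of k s" and Uk: "Uk = first_cols k U"
    using assms(6) unfolding truncated_svd_def by blast
  have X: "X \<in> carrier_mat n p" by fact
  have km: "k \<le> m" using assms(5) m_def by simp
  have V: "V \<in> carrier_mat n m" and U: "U \<in> carrier_mat p m"
    and UU: "transpose_mat U * U = 1\<^sub>m m"
    and Xd: "X = V * diag_mat_of m s * transpose_mat U"
    using svd X unfolding is_svd_def m_def Let_def by auto
  have Vkc: "Vk \<in> carrier_mat n k" using V unfolding Vk first_cols_def by auto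
  have Ukc: "Uk \<in> carrier_mat p k" using U unfolding Uk first_cols_def by auto
  have Dkc: "Dk \<in> carrier_mat k k" unfolding Dk diag_mat_of_def by auto
  have Dmc: "diag_mat_of m s \<in> carrier_mat m m" unfolding diag_mat_of_def by auto
  have Pc: "proj_mat Z \<in> carrier_mat n n"
    using assms(2) unfolding proj_mat_def Let_def by auto
  have colU: "col Uk j = col U j" if "j < k" for j
    using that U km unfolding Uk first_cols_def by (auto intro!: eq_vecI)
  have UU': "(col U i) \<bullet> (col U j) = (if i = j then 1 else 0)" if "i < m" "j < m" for i j
  proof -
    have "(transpose_mat U * U) $$ (i,j) = (col U i) \<bullet> (col U j)"
      using that U by simp
    then show ?thesis using UU that by simp
  qed
  have UkUk: "transpose_mat Uk * Uk = 1\<^sub>m k"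
    apply (rule eq_matI)
    using Ukc km by (auto simp: colU UU')
  define J where "J = mat m k (\<lambda>(i,j). if i = j then (1::real) else 0)"
  have UtUk: "transpose_mat U * Uk = J"
    apply (rule eq_matI)
    using Ukc U km by (auto simp: colU UU' J_def)
  define S where "S = mat m k (\<lambda>(i,j). if i = j then s i else 0)"
  have DJ: "diag_mat_of m s * J = S"
    apply (rule eq_matI)
    using km by (auto simp: S_def J_def diag_mat_of_def scalar_prod_def
        if_distrib[of "\<lambda>x. _ * x"] sum.delta' cong: if_cong)
  have VS: "V * S = Vk * Dk"
    apply (rule eq_matI)
    using km V by (auto simp: S_def Vk Dk first_cols_def diag_mat_of_def scalar_prod_def
        if_distrib[of "\<lambda>x. _ * x"] sum.delta' cong: if_cong)
  define E where "E = X - Vk * Dk * transpose_mat Uk"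
  have Ec: "E \<in> carrier_mat n p" using X Vkc Dkc Ukc unfolding E_def by auto
  have XUk: "X * Uk = Vk * Dk"
  proof -
    have "X * Uk = V * (diag_mat_of m s * (transpose_mat U * Uk))"
      unfolding Xd using V Dmc U Ukc
      by (simp add: assoc_mult_mat[of V n m "diag_mat_of m s" m "transpose_mat U" p]
          assoc_mult_mat[of "diag_mat_of m s" m m "transpose_mat U" p Uk k]
          assoc_mult_mat[of V n m "diag_mat_of m s * transpose_mat U" p Uk k])
    then show ?thesis using DJ VS UtUk by simp
  qed
  have WUk: "Vk * Dk * transpose_mat Uk * Uk = Vk * Dk"
  proof -
    have "Vk * Dk * transpose_mat Uk * Uk = Vk * (Dk * (transpose_mat Uk * Uk))"
      using Vkc Dkc Ukc by (simp add: assoc_mult_mat[of _ n k _ p _ k])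
    then show ?thesis using UkUk Vkc Dkc by simp
  qed
  have EU: "E * Uk = 0\<^sub>m n k"
  proof -
    have "E * Uk = X * Uk - Vk * Dk * transpose_mat Uk * Uk"
      unfolding E_def using X Vkc Dkc Ukc
      by (intro minus_mult_distrib_mat[of _ n p _ _ k]) auto
    also have "\<dots> = Vk * Dk - Vk * Dk" by (simp only: XUk WUk)
    finally show ?thesis using Vkc Dkc by auto
  qed
  define M where "M = proj_mat Z * Vk * Dk"
  have Mc: "M \<in> carrier_mat n k" using Pc Vkc Dkc unfolding M_def by auto
  define Q where "Q = M * transpose_mat Uk"
  have Qc: "Q \<in> carrier_mat n p" using Mc Ukc unfolding Q_def by auto
  have eq: "X - (1\<^sub>m n - proj_mat Z) * Vk * Dk * transpose_mat Uk = E + Q"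
  proof -
    have "(1\<^sub>m n - proj_mat Z) * Vk * Dk * transpose_mat Uk
        = Vk * Dk * transpose_mat Uk - Q"
      unfolding Q_def M_def using Pc Vkc Dkc Ukc
      by (simp add: minus_mult_distrib_mat[of _ n n _ _ k] minus_mult_distrib_mat[of _ n k _ _ k]
          minus_mult_distrib_mat[of _ n k _ _ p])
    then show ?thesis unfolding E_def using X Vkc Dkc Ukc Qc
      by (intro eq_matI) auto
  qed
  have cross: "ipm E Q = 0"
    unfolding Q_def using ipm_transfer[OF Ec Mc Ukc] EU ipm_zero by simp
  have QM: "fsq Q = fsq M"
  proof -
    have "fsq Q = ipm (Q * Uk) M" unfolding fsq_ipm
      using ipm_transfer[OF Qc Mc Ukc] Q_def by simp
    also have "Q * Uk = M" unfolding Q_def using Mc Ukc UkUk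
      by (simp add: assoc_mult_mat[of _ n k _ p _ k])
    finally show ?thesis by (simp add: fsq_ipm)
  qed
  have main: "fsq (E + Q) = fsq E + fsq M"
    using fsq_add[OF Ec Qc] cross QM by simp
  have nn: "0 \<le> fsq M" unfolding fsq_def by (simp add: sum_nonneg)
  show ?thesis unfolding eq frob_sq using main nn E_def M_def by simp
qed

end
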